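(* Suppose $\|\mu_a\|_\infty,\|\widehat\mu_a\|_\infty\le B<\infty$ a.s. for all $a$, and $\mathbb{P}\{\epsilon\le\widehat\pi_a(X)\le1-\epsilon\}=1$ for some $\epsilon>0$ and all $a$. Then for any $a\in\mathcal{A}$, $$\mathbb{P}\{\varphi_{2,a}(\widehat\eta)-\varphi_{2,a}(\eta)\}\lesssim\|\widehat\mu_a-\mu_a\|\big(\|\widehat\mu_a-\mu_a\|+\|\widehat\pi_a-\pi_a\|\big).$$
   Context: $Z=(Y,A,X)\sim\mathbb{P}$, $A\in\mathcal{A}=\{1,\dots,p\}$. $\mu_a(X)=\mathbb{E}(Y\mid X,A=a)$, $\pi_a(X)=\mathbb{P}(A=a\mid X)$, $\eta=\{\pi_a,\mu_a\}_a$; $\widehat\eta=\{\widehat\pi_a,\widehat\mu_a\}_a$ are estimators held fixed under $\mathbb{P}$. $\varphi_{2,a}(Z;\eta)=2\mu_a(X)\frac{\mathbb{1}(A=a)}{\pi_a(X)}\{Y-\mu_A(X)\}+\mu_a^2(X)$ (and $\varphi_{2,a}(\widehat\eta)$ the same with $\widehat\mu,\widehat\pi$ in place of $\mu,\pi$). $\|f\|=(\int f^2d\mathbb{P})^{1/2}$ is the $L_2(\mathbb{P})$ norm; $\lesssim$ inequality up to a multiplicative constant. *)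

theory Defs
  imports "HOL-Probability.Probability"
begin

definition phi2 :: "(nat \<Rightarrow> 'x \<Rightarrow> real) \<Rightarrow> (nat \<Rightarrow> 'x \<Rightarrow> real) \<Rightarrow> nat
    \<Rightarrow> real \<Rightarrow> nat \<Rightarrow> 'x \<Rightarrow> real" where
  "phi2 \<pi> mu a y aa x =
     2 * mu a x * (of_bool (aa = a) / \<pi> a x) * (y - mu aa x) + (mu a x)\<^sup>2"

definition L2X :: "'w measure \<Rightarrow> ('w \<Rightarrow> 'x) \<Rightarrow> ('x \<Rightarrow> real) \<Rightarrow> real" where
  "L2X M X f = sqrt (\<integral>\<omega>. (f (X \<omega>))\<^sup>2 \<partial>M)"

text \<open>The data-generating model: Z = (Y, A, X) on the probability space M,
  A takes values in {1..p}, mu_a(X) = E(Y | X, A = a) and pi_a(X) = P(A = a | X),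
  expressed through the library's conditional expectation.\<close>
definition nuisance_model ::
  "'w measure \<Rightarrow> 'x measure \<Rightarrow> ('w \<Rightarrow> 'x) \<Rightarrow> ('w \<Rightarrow> nat) \<Rightarrow> ('w \<Rightarrow> real) \<Rightarrow> nat
   \<Rightarrow> (nat \<Rightarrow> 'x \<Rightarrow> real) \<Rightarrow> (nat \<Rightarrow> 'x \<Rightarrow> real) \<Rightarrow> bool" where
  "nuisance_model M MX X A Y p mu \<pi> \<longleftrightarrow>
     prob_space M \<and>
     X \<in> measurable M MX \<and> A \<in> measurable M (count_space UNIV) \<and>
     Y \<in> borel_measurable M \<and> integrable M Y \<and>
     (\<forall>\<omega>\<in>space M. A \<omega> \<in> {1..p}) \<and>
     (\<forall>a\<in>{1..p}. mu a \<in> borel_measurable MX \<and> \<pi> a \<in> borel_measurable MX) \<and>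
     (AE \<omega> in M. mu (A \<omega>) (X \<omega>) =
        real_cond_exp M (vimage_algebra (space M) (\<lambda>\<omega>. (X \<omega>, A \<omega>)) (MX \<Otimes>\<^sub>M count_space UNIV)) Y \<omega>) \<and>
     (\<forall>a\<in>{1..p}. AE \<omega> in M. \<pi> a (X \<omega>) =
        real_cond_exp M (vimage_algebra (space M) X MX) (indicator {\<omega>\<in>space M. A \<omega> = a}) \<omega>)"

end

theory Submission
  imports Defs
begin

lemma cs_real:
  fixes f g :: "'a \<Rightarrow> real"
  assumes [measurable]: "f \<in> borel_measurable M" "g \<in> borel_measurable M"
    and i1: "integrable M (\<lambda>x. (f x)\<^sup>2)" and i2: "integrable M (\<lambda>x. (g x)\<^sup>2)"
    and i3: "integrable M (\<lambda>x. \<bar>f x\<bar> * \<bar>g x\<bar>)"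
  shows "(\<integral>x. \<bar>f x\<bar> * \<bar>g x\<bar> \<partial>M) \<le> sqrt (\<integral>x. (f x)\<^sup>2 \<partial>M) * sqrt (\<integral>x. (g x)\<^sup>2 \<partial>M)"
proof -
  have "(\<integral>\<^sup>+x. ennreal \<bar>f x\<bar> * ennreal \<bar>g x\<bar> \<partial>M)\<^sup>2 \<le> (\<integral>\<^sup>+x. (ennreal \<bar>f x\<bar>) ^ 2 \<partial>M) * (\<integral>\<^sup>+x. (ennreal \<bar>g x\<bar>) ^ 2 \<partial>M)"
    by (rule Cauchy_Schwarz_nn_integral) auto
  also have "(\<lambda>x. ennreal \<bar>f x\<bar> * ennreal \<bar>g x\<bar>) = (\<lambda>x. ennreal (\<bar>f x\<bar> * \<bar>g x\<bar>))"
    by (auto simp: ennreal_mult'')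
  also have "(\<lambda>x. (ennreal \<bar>f x\<bar>) ^ 2) = (\<lambda>x. ennreal ((f x)\<^sup>2))"
    by (auto simp: ennreal_power)
  also have "(\<lambda>x. (ennreal \<bar>g x\<bar>) ^ 2) = (\<lambda>x. ennreal ((g x)\<^sup>2))"
    by (auto simp: ennreal_power)
  also have "(\<integral>\<^sup>+x. ennreal (\<bar>f x\<bar> * \<bar>g x\<bar>) \<partial>M) = ennreal (\<integral>x. \<bar>f x\<bar> * \<bar>g x\<bar> \<partial>M)"
    by (rule nn_integral_eq_integral[OF i3]) auto
  also have "(\<integral>\<^sup>+x. ennreal ((f x)\<^sup>2) \<partial>M) = ennreal (\<integral>x. (f x)\<^sup>2 \<partial>M)"
    by (rule nn_integral_eq_integral[OF i1]) auto
  also have "(\<integral>\<^sup>+x. ennreal ((g x)\<^sup>2) \<partial>M) = ennreal (\<integral>x. (g x)\<^sup>2 \<partial>M)"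
    by (rule nn_integral_eq_integral[OF i2]) auto
  finally have *: "(ennreal (\<integral>x. \<bar>f x\<bar> * \<bar>g x\<bar> \<partial>M))\<^sup>2 \<le> ennreal (\<integral>x. (f x)\<^sup>2 \<partial>M) * ennreal (\<integral>x. (g x)\<^sup>2 \<partial>M)" .
  have p1: "0 \<le> (\<integral>x. \<bar>f x\<bar> * \<bar>g x\<bar> \<partial>M)" by (rule integral_nonneg_AE) simp
  have p2: "0 \<le> (\<integral>x. (f x)\<^sup>2 \<partial>M)" "0 \<le> (\<integral>x. (g x)\<^sup>2 \<partial>M)" by (auto intro: integral_nonneg)
  from * p1 p2 have "(\<integral>x. \<bar>f x\<bar> * \<bar>g x\<bar> \<partial>M)\<^sup>2 \<le> (\<integral>x. (f x)\<^sup>2 \<partial>M) * (\<integral>x. (g x)\<^sup>2 \<partial>M)"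
    by (simp add: ennreal_power ennreal_mult''[symmetric] ennreal_le_iff)
  then show ?thesis by (simp add: real_le_rsqrt real_sqrt_mult[symmetric])
qed

lemma bound_T2:
  fixes m mh p ph B \<epsilon> :: real
  assumes "\<bar>m\<bar> \<le> B" "\<bar>mh\<bar> \<le> B" "\<epsilon> \<le> ph" "\<epsilon> > 0"
  shows "p * (2 * (mh / ph) * (m - mh)) + (mh\<^sup>2 - m\<^sup>2) \<le> (2 * \<bar>B\<bar> / \<epsilon>) * (\<bar>mh - m\<bar> * \<bar>ph - p\<bar>)"
proof -
  have ph: "ph > 0" using assms by linarith
  have eq: "p * (2 * (mh / ph) * (m - mh)) + (mh\<^sup>2 - m\<^sup>2) = - (mh - m)\<^sup>2 + 2 * (mh - m) * (mh / ph) * (ph - p)"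
    using ph by (simp add: field_simps power2_eq_square)
  have "\<bar>mh / ph\<bar> \<le> \<bar>B\<bar> / \<epsilon>"
    using assms ph by (simp add: abs_divide frac_le)
  then have "2 * (mh - m) * (mh / ph) * (ph - p) \<le> 2 * \<bar>mh - m\<bar> * (\<bar>B\<bar> / \<epsilon>) * \<bar>ph - p\<bar>"
  proof -
    have "2 * (mh - m) * (mh / ph) * (ph - p) \<le> \<bar>2 * (mh - m) * (mh / ph) * (ph - p)\<bar>" by (rule abs_ge_self)
    also have "\<dots> = 2 * \<bar>mh - m\<bar> * \<bar>mh / ph\<bar> * \<bar>ph - p\<bar>" unfolding abs_mult by simp
    also have "\<dots> \<le> 2 * \<bar>mh - m\<bar> * (\<bar>B\<bar> / \<epsilon>) * \<bar>ph - p\<bar>"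
      using \<open>\<bar>mh / ph\<bar> \<le> \<bar>B\<bar> / \<epsilon>\<close> by (intro mult_right_mono mult_left_mono) auto
    finally show ?thesis .
  qed
  then show ?thesis unfolding eq by (simp add: algebra_simps) (smt (verit) zero_le_power2)
qed

lemma bound_G:
  fixes m mh ph B \<epsilon> :: real
  assumes "\<bar>m\<bar> \<le> B" "\<bar>mh\<bar> \<le> B" "\<epsilon> \<le> ph" "\<epsilon> > 0"
  shows "\<bar>2 * (mh / ph) * (m - mh)\<bar> \<le> 2 * (\<bar>B\<bar> / \<epsilon>) * (2 * \<bar>B\<bar>)"
proof -
  have ph: "ph > 0" using assms by linarith
  have 1: "\<bar>mh / ph\<bar> \<le> \<bar>B\<bar> / \<epsilon>"
    using assms ph by (simp add: abs_divide frac_le)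
  have 2: "\<bar>m - mh\<bar> \<le> 2 * \<bar>B\<bar>" using assms by linarith
  have "\<bar>2 * (mh / ph) * (m - mh)\<bar> = 2 * \<bar>mh / ph\<bar> * \<bar>m - mh\<bar>" unfolding abs_mult by simp
  also have "\<dots> \<le> 2 * (\<bar>B\<bar> / \<epsilon>) * (2 * \<bar>B\<bar>)"
    using 1 2 assms(4) by (intro mult_mono mult_left_mono) auto
  finally show ?thesis .
qed

lemma sq_le: fixes x c :: real assumes "\<bar>x\<bar> \<le> c" shows "norm (x\<^sup>2) \<le> c\<^sup>2"
proof -
  have "\<bar>x\<bar>\<^sup>2 \<le> c\<^sup>2" by (rule power_mono[OF assms abs_ge_zero])
  then show ?thesis by simp
qed

lemma setup_sub:
  assumes "prob_space M" "G \<in> measurable M N"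
  shows "sigma_finite_subalgebra M (vimage_algebra (space M) G N)"
proof -
  interpret prob_space M by fact
  have "subalgebra M (vimage_algebra (space M) G N)"
    unfolding subalgebra_def using assms(2) by (simp add: measurable_iff_sets)
  then interpret finite_measure_subalgebra M "vimage_algebra (space M) G N"
    by unfold_locales
  show ?thesis by (rule sigma_finite_subalgebra_axioms)
qed

lemma main:
  fixes M :: "'w measure" and MX :: "'x measure" and B \<epsilon> :: real
  assumes eps: "\<epsilon> > 0"
  and nm: "nuisance_model M MX X A Y p mu \<pi>"
  and hm: "\<forall>a\<in>{1..p}. muh a \<in> borel_measurable MX \<and> \<pi>h a \<in> borel_measurable MX"
  and bd: "\<forall>a\<in>{1..p}. AE \<omega> in M. \<bar>mu a (X \<omega>)\<bar> \<le> B \<and> \<bar>muh a (X \<omega>)\<bar> \<le> B"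
  and pb: "\<forall>a\<in>{1..p}. AE \<omega> in M. \<epsilon> \<le> \<pi>h a (X \<omega>) \<and> \<pi>h a (X \<omega>) \<le> 1 - \<epsilon>"
  and a: "a \<in> {1..p}"
  shows "(\<integral>\<omega>. phi2 \<pi>h muh a (Y \<omega>) (A \<omega>) (X \<omega>) - phi2 \<pi> mu a (Y \<omega>) (A \<omega>) (X \<omega>) \<partial>M)
        \<le> (2 * \<bar>B\<bar> / \<epsilon>) * L2X M X (\<lambda>x. muh a x - mu a x)
              * (L2X M X (\<lambda>x. muh a x - mu a x) + L2X M X (\<lambda>x. \<pi>h a x - \<pi> a x))"
proof -
  define F1 where "F1 = vimage_algebra (space M) (\<lambda>\<omega>. (X \<omega>, A \<omega>)) (MX \<Otimes>\<^sub>M count_space UNIV)"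
  define F2 where "F2 = vimage_algebra (space M) X MX"
  have ps: "prob_space M" using nm unfolding nuisance_model_def by blast
  interpret prob_space M by (rule ps)
  have [measurable]: "X \<in> measurable M MX" "A \<in> measurable M (count_space UNIV)"
    "Y \<in> borel_measurable M" and iY: "integrable M Y"
    using nm unfolding nuisance_model_def by blast+
  have [measurable]: "mu a \<in> borel_measurable MX" "\<pi> a \<in> borel_measurable MX"
    using nm a unfolding nuisance_model_def by blast+
  have [measurable]: "muh a \<in> borel_measurable MX" "\<pi>h a \<in> borel_measurable MX"
    using hm a by blast+
  have aeY: "AE \<omega> in M. mu (A \<omega>) (X \<omega>) = real_cond_exp M F1 Y \<omega>"
    using nm unfolding nuisance_model_def F1_def by blast
  have aeP: "AE \<omega> in M. \<pi> a (X \<omega>) = real_cond_exp M F2 (indicator {\<omega>\<in>space M. A \<omega> = a}) \<omega>"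
    using nm a unfolding nuisance_model_def F2_def by blast
  have XA: "(\<lambda>\<omega>. (X \<omega>, A \<omega>)) \<in> measurable M (MX \<Otimes>\<^sub>M count_space UNIV)" by measurable
  interpret S1: sigma_finite_subalgebra M F1 unfolding F1_def by (rule setup_sub[OF ps XA])
  interpret S2: sigma_finite_subalgebra M F2 unfolding F2_def by (rule setup_sub[OF ps]) measurable
  have AEb: "AE \<omega> in M. \<bar>mu a (X \<omega>)\<bar> \<le> B \<and> \<bar>muh a (X \<omega>)\<bar> \<le> B" using bd a by blast
  have AEp: "AE \<omega> in M. \<epsilon> \<le> \<pi>h a (X \<omega>) \<and> \<pi>h a (X \<omega>) \<le> 1 - \<epsilon>" using pb a by blast

  define I where "I = (\<lambda>\<omega>. (of_bool (A \<omega> = a) :: real))"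
  define hf where "hf = (\<lambda>x. muh a x / \<pi>h a x - mu a x / \<pi> a x)"
  define Gf where "Gf = (\<lambda>x. 2 * (muh a x / \<pi>h a x) * (mu a x - muh a x))"
  define f where "f = (\<lambda>\<omega>. I \<omega> * hf (X \<omega>))"
  define g where "g = (\<lambda>\<omega>. Y \<omega> - I \<omega> * mu a (X \<omega>))"
  define T2 where "T2 = (\<lambda>\<omega>. I \<omega> * Gf (X \<omega>) + ((muh a (X \<omega>))\<^sup>2 - (mu a (X \<omega>))\<^sup>2))"
  have [measurable]: "I \<in> borel_measurable M" unfolding I_def by measurable
  have [measurable]: "hf \<in> borel_measurable MX" "Gf \<in> borel_measurable MX" unfolding hf_def Gf_def by measurable
  have [measurable]: "f \<in> borel_measurable M" "g \<in> borel_measurable M" "T2 \<in> borel_measurable M"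
    unfolding f_def g_def T2_def by measurable
  have pw: "phi2 \<pi>h muh a (Y \<omega>) (A \<omega>) (X \<omega>) - phi2 \<pi> mu a (Y \<omega>) (A \<omega>) (X \<omega>) = 2 * (f \<omega> * g \<omega>) + T2 \<omega>" for \<omega>
    unfolding phi2_def f_def g_def T2_def I_def hf_def Gf_def
    by (cases "A \<omega> = a") (simp_all add: divide_inverse power2_eq_square algebra_simps)
  have I01: "I \<omega> = 0 \<or> I \<omega> = 1" for \<omega> unfolding I_def by simp
  have K0: "0 \<le> 2 * \<bar>B\<bar> / \<epsilon>" using eps by simp
  define Ld where "Ld = L2X M X (\<lambda>x. muh a x - mu a x)"
  define Le where "Le = L2X M X (\<lambda>x. \<pi>h a x - \<pi> a x)"
  have Ld0: "0 \<le> Ld" unfolding Ld_def L2X_def by (intro real_sqrt_ge_zero integral_nonneg_AE) simp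
  have Le0: "0 \<le> Le" unfolding Le_def L2X_def by (intro real_sqrt_ge_zero integral_nonneg_AE) simp
  have rhs0: "0 \<le> (2 * \<bar>B\<bar> / \<epsilon>) * Ld * (Ld + Le)" using K0 Ld0 Le0 by (intro mult_nonneg_nonneg) auto
  show ?thesis
  proof (cases "integrable M (\<lambda>\<omega>. 2 * (f \<omega> * g \<omega>) + T2 \<omega>)")
    case False
    then show ?thesis unfolding pw using rhs0 by (simp add: not_integrable_integral_eq Ld_def Le_def)
  next
    case True
    define K where "K = 2 * (\<bar>B\<bar> / \<epsilon>) * (2 * \<bar>B\<bar>)"
    have iGI: "integrable M (\<lambda>\<omega>. I \<omega> * Gf (X \<omega>))"
    proof (rule integrable_const_bound[where B=K])
      show "AE \<omega> in M. norm (I \<omega> * Gf (X \<omega>)) \<le> K"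
        using AEb AEp
      proof eventually_elim
        case (elim \<omega>)
        have "\<bar>Gf (X \<omega>)\<bar> \<le> K" unfolding Gf_def K_def
          by (rule bound_G) (use elim eps in auto)
        then show ?case using I01[of \<omega>] by auto
      qed
    qed measurable
    have isq: "integrable M (\<lambda>\<omega>. (mu a (X \<omega>))\<^sup>2)" "integrable M (\<lambda>\<omega>. (muh a (X \<omega>))\<^sup>2)"
    proof -
      show "integrable M (\<lambda>\<omega>. (mu a (X \<omega>))\<^sup>2)"
      proof (rule integrable_const_bound[where B="B\<^sup>2"])
        show "AE \<omega> in M. norm ((mu a (X \<omega>))\<^sup>2) \<le> B\<^sup>2"
          using AEb by eventually_elim (auto simp: abs_le_square_iff[symmetric])
      qed measurable
      show "integrable M (\<lambda>\<omega>. (muh a (X \<omega>))\<^sup>2)"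
      proof (rule integrable_const_bound[where B="B\<^sup>2"])
        show "AE \<omega> in M. norm ((muh a (X \<omega>))\<^sup>2) \<le> B\<^sup>2"
          using AEb by eventually_elim (auto simp: abs_le_square_iff[symmetric])
      qed measurable
    qed
    have iH: "integrable M (\<lambda>\<omega>. (muh a (X \<omega>))\<^sup>2 - (mu a (X \<omega>))\<^sup>2)"
      by (rule Bochner_Integration.integrable_diff[OF isq(2) isq(1)])
    have iT2: "integrable M T2" unfolding T2_def by (rule Bochner_Integration.integrable_add[OF iGI iH])
    have ifg2: "integrable M (\<lambda>\<omega>. 2 * (f \<omega> * g \<omega>))"
    proof -
      have "integrable M (\<lambda>\<omega>. (2 * (f \<omega> * g \<omega>) + T2 \<omega>) - T2 \<omega>)"
        by (rule Bochner_Integration.integrable_diff[OF True iT2])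
      then show ?thesis by simp
    qed
    have ifg: "integrable M (\<lambda>\<omega>. f \<omega> * g \<omega>)"
    proof -
      have "integrable M (\<lambda>\<omega>. (1/2) * (2 * (f \<omega> * g \<omega>)))"
        by (rule Bochner_Integration.integrable_mult_right[OF ifg2])
      then show ?thesis by simp
    qed
    have XAsp: "(\<lambda>\<omega>. (X \<omega>, A \<omega>)) \<in> space M \<rightarrow> space (MX \<Otimes>\<^sub>M count_space UNIV)"
      using measurable_space[OF XA] by blast
    have km: "(\<lambda>z. (of_bool (snd z = a) :: real) * hf (fst z)) \<in> borel_measurable (MX \<Otimes>\<^sub>M count_space UNIV)"
      by measurable
    have km2: "(\<lambda>z. (of_bool (snd z = a) :: real) * mu a (fst z)) \<in> borel_measurable (MX \<Otimes>\<^sub>M count_space UNIV)"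
      by measurable
    have fF: "f \<in> borel_measurable F1"
      using measurable_comp[OF measurable_vimage_algebra1[OF XAsp] km]
      unfolding F1_def f_def I_def by (simp add: o_def)
    have ImF: "(\<lambda>\<omega>. I \<omega> * mu a (X \<omega>)) \<in> borel_measurable F1"
      using measurable_comp[OF measurable_vimage_algebra1[OF XAsp] km2]
      unfolding F1_def I_def by (simp add: o_def)
    have iIm: "integrable M (\<lambda>\<omega>. I \<omega> * mu a (X \<omega>))"
    proof (rule integrable_const_bound[where B="\<bar>B\<bar>"])
      show "AE \<omega> in M. norm (I \<omega> * mu a (X \<omega>)) \<le> \<bar>B\<bar>"
        using AEb
      proof eventually_elim
        case (elim \<omega>)
        then show ?case using I01[of \<omega>] by auto
      qed
    qed measurable
    have ce1: "AE \<omega> in M. real_cond_exp M F1 g \<omega> = real_cond_exp M F1 Y \<omega> - real_cond_exp M F1 (\<lambda>\<omega>. I \<omega> * mu a (X \<omega>)) \<omega>"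
      unfolding g_def by (rule S1.real_cond_exp_diff[OF iY iIm])
    have ce2: "AE \<omega> in M. real_cond_exp M F1 (\<lambda>\<omega>. I \<omega> * mu a (X \<omega>)) \<omega> = I \<omega> * mu a (X \<omega>)"
      by (rule S1.real_cond_exp_F_meas[OF iIm ImF])
    have ae0: "AE \<omega> in M. f \<omega> * real_cond_exp M F1 g \<omega> = 0"
      using ce1 ce2 aeY
    proof eventually_elim
      case (elim \<omega>)
      then show ?case unfolding f_def I_def by (cases "A \<omega> = a") auto
    qed
    have int0: "(\<integral>\<omega>. f \<omega> * g \<omega> \<partial>M) = 0"
    proof -
      have "(\<integral>\<omega>. f \<omega> * g \<omega> \<partial>M) = (\<integral>\<omega>. f \<omega> * real_cond_exp M F1 g \<omega> \<partial>M)"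
        by (rule S1.real_cond_exp_intg(2)[symmetric, OF ifg fF]) measurable
      also have "\<dots> = (\<integral>\<omega>. 0 \<partial>M)"
        by (rule integral_cong_AE[OF _ _ ae0]) measurable
      finally show ?thesis by simp
    qed
    define ind where "ind = (indicator {\<omega>\<in>space M. A \<omega> = a} :: 'w \<Rightarrow> real)"
    have [measurable]: "ind \<in> borel_measurable M" unfolding ind_def by measurable
    have Xsp: "X \<in> space M \<rightarrow> space MX" by (auto intro: measurable_space[of X M MX])
    have GF: "(\<lambda>\<omega>. Gf (X \<omega>)) \<in> borel_measurable F2"
      using measurable_comp[OF measurable_vimage_algebra1[OF Xsp], of Gf borel]
      unfolding F2_def by (simp add: o_def)
    have indI: "\<omega> \<in> space M \<Longrightarrow> Gf (X \<omega>) * ind \<omega> = I \<omega> * Gf (X \<omega>)" for \<omega>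
      unfolding ind_def I_def by (simp add: indicator_def)
    have iGind: "integrable M (\<lambda>\<omega>. Gf (X \<omega>) * ind \<omega>)"
    proof -
      have "integrable M (\<lambda>\<omega>. Gf (X \<omega>) * ind \<omega>) \<longleftrightarrow> integrable M (\<lambda>\<omega>. I \<omega> * Gf (X \<omega>))"
        by (rule Bochner_Integration.integrable_cong) (simp_all add: indI)
      then show ?thesis using iGI by simp
    qed
    have iGce: "integrable M (\<lambda>\<omega>. Gf (X \<omega>) * real_cond_exp M F2 ind \<omega>)"
      by (rule S2.real_cond_exp_intg(1)[OF iGind GF]) measurable
    have eGce: "(\<integral>\<omega>. Gf (X \<omega>) * real_cond_exp M F2 ind \<omega> \<partial>M) = (\<integral>\<omega>. Gf (X \<omega>) * ind \<omega> \<partial>M)"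
      by (rule S2.real_cond_exp_intg(2)[OF iGind GF]) measurable
    have aeP': "AE \<omega> in M. Gf (X \<omega>) * real_cond_exp M F2 ind \<omega> = \<pi> a (X \<omega>) * Gf (X \<omega>)"
      using aeP unfolding ind_def by eventually_elim simp
    have ipG: "integrable M (\<lambda>\<omega>. \<pi> a (X \<omega>) * Gf (X \<omega>))"
      using iGce by (rule integrable_cong_AE_imp[OF _ _ aeP']) measurable
    have epG: "(\<integral>\<omega>. \<pi> a (X \<omega>) * Gf (X \<omega>) \<partial>M) = (\<integral>\<omega>. I \<omega> * Gf (X \<omega>) \<partial>M)"
    proof -
      have "(\<integral>\<omega>. \<pi> a (X \<omega>) * Gf (X \<omega>) \<partial>M) = (\<integral>\<omega>. Gf (X \<omega>) * real_cond_exp M F2 ind \<omega> \<partial>M)"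
        by (rule integral_cong_AE[symmetric, OF _ _ aeP']) measurable
      also have "\<dots> = (\<integral>\<omega>. Gf (X \<omega>) * ind \<omega> \<partial>M)" by (rule eGce)
      also have "\<dots> = (\<integral>\<omega>. I \<omega> * Gf (X \<omega>) \<partial>M)" by (rule Bochner_Integration.integral_cong) (simp_all add: indI)
      finally show ?thesis .
    qed
    define T2' where "T2' = (\<lambda>\<omega>. \<pi> a (X \<omega>) * Gf (X \<omega>) + ((muh a (X \<omega>))\<^sup>2 - (mu a (X \<omega>))\<^sup>2))"
    have iT2': "integrable M T2'" unfolding T2'_def by (rule Bochner_Integration.integrable_add[OF ipG iH])
    have LHS: "(\<integral>\<omega>. phi2 \<pi>h muh a (Y \<omega>) (A \<omega>) (X \<omega>) - phi2 \<pi> mu a (Y \<omega>) (A \<omega>) (X \<omega>) \<partial>M) = (\<integral>\<omega>. T2' \<omega> \<partial>M)"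
    proof -
      have "(\<integral>\<omega>. phi2 \<pi>h muh a (Y \<omega>) (A \<omega>) (X \<omega>) - phi2 \<pi> mu a (Y \<omega>) (A \<omega>) (X \<omega>) \<partial>M)
          = (\<integral>\<omega>. 2 * (f \<omega> * g \<omega>) \<partial>M) + (\<integral>\<omega>. T2 \<omega> \<partial>M)"
        unfolding pw by (rule Bochner_Integration.integral_add[OF ifg2 iT2])
      also have "(\<integral>\<omega>. 2 * (f \<omega> * g \<omega>) \<partial>M) = 0" using int0 by simp
      also have "(\<integral>\<omega>. T2 \<omega> \<partial>M) = (\<integral>\<omega>. I \<omega> * Gf (X \<omega>) \<partial>M) + (\<integral>\<omega>. (muh a (X \<omega>))\<^sup>2 - (mu a (X \<omega>))\<^sup>2 \<partial>M)"
        unfolding T2_def by (rule Bochner_Integration.integral_add[OF iGI iH])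
      also have "\<dots> = (\<integral>\<omega>. T2' \<omega> \<partial>M)"
        unfolding T2'_def epG[symmetric] by (rule Bochner_Integration.integral_add[symmetric, OF ipG iH])
      finally show ?thesis by simp
    qed
    have ce_pos: "AE \<omega> in M. real_cond_exp M F2 ind \<omega> \<ge> 0"
      by (rule S2.real_cond_exp_pos) (auto simp: ind_def)
    have i1: "integrable M (\<lambda>\<omega>. 1::real)" by simp
    have iind: "integrable M ind"
      by (rule integrable_const_bound[where B=1]) (auto simp: ind_def)
    have ce_le: "AE \<omega> in M. real_cond_exp M F2 ind \<omega> \<le> real_cond_exp M F2 (\<lambda>\<omega>. 1) \<omega>"
      by (rule S2.real_cond_exp_mono[OF _ iind i1]) (auto simp: ind_def)
    have ce_1: "AE \<omega> in M. real_cond_exp M F2 (\<lambda>\<omega>. 1) \<omega> = 1"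
      by (rule S2.real_cond_exp_F_meas[OF i1]) simp
    have AEpp: "AE \<omega> in M. 0 \<le> \<pi> a (X \<omega>) \<and> \<pi> a (X \<omega>) \<le> 1"
      using ce_pos ce_le ce_1 aeP unfolding ind_def by eventually_elim auto
    define d where "d = (\<lambda>\<omega>. muh a (X \<omega>) - mu a (X \<omega>))"
    define e where "e = (\<lambda>\<omega>. \<pi>h a (X \<omega>) - \<pi> a (X \<omega>))"
    have [measurable]: "d \<in> borel_measurable M" "e \<in> borel_measurable M" unfolding d_def e_def by measurable
    have AEd: "AE \<omega> in M. \<bar>d \<omega>\<bar> \<le> 2 * \<bar>B\<bar>" using AEb unfolding d_def by eventually_elim auto
    have AEe: "AE \<omega> in M. \<bar>e \<omega>\<bar> \<le> 2" using AEp AEpp unfolding e_def by eventually_elim (use eps in auto)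
    have id2: "integrable M (\<lambda>\<omega>. (d \<omega>)\<^sup>2)"
    proof (rule integrable_const_bound[where B="(2 * \<bar>B\<bar>)\<^sup>2"])
      show "AE \<omega> in M. norm ((d \<omega>)\<^sup>2) \<le> (2 * \<bar>B\<bar>)\<^sup>2"
        using AEd by eventually_elim (rule sq_le)
    qed measurable
    have ie2: "integrable M (\<lambda>\<omega>. (e \<omega>)\<^sup>2)"
    proof (rule integrable_const_bound[where B="2\<^sup>2"])
      show "AE \<omega> in M. norm ((e \<omega>)\<^sup>2) \<le> 2\<^sup>2"
        using AEe by eventually_elim (rule sq_le)
    qed measurable
    have ide: "integrable M (\<lambda>\<omega>. \<bar>d \<omega>\<bar> * \<bar>e \<omega>\<bar>)"
    proof (rule integrable_const_bound[where B="2 * \<bar>B\<bar> * 2"])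
      show "AE \<omega> in M. norm (\<bar>d \<omega>\<bar> * \<bar>e \<omega>\<bar>) \<le> 2 * \<bar>B\<bar> * 2"
        using AEd AEe
      proof eventually_elim
        case (elim \<omega>)
        have "\<bar>d \<omega>\<bar> * \<bar>e \<omega>\<bar> \<le> (2 * \<bar>B\<bar>) * 2"
          by (rule mult_mono) (use elim in auto)
        then show ?case by simp
      qed
    qed measurable
    have "(\<integral>\<omega>. T2' \<omega> \<partial>M) \<le> (\<integral>\<omega>. (2 * \<bar>B\<bar> / \<epsilon>) * (\<bar>d \<omega>\<bar> * \<bar>e \<omega>\<bar>) \<partial>M)"
    proof (rule integral_mono_AE[OF iT2'])
      show "integrable M (\<lambda>\<omega>. (2 * \<bar>B\<bar> / \<epsilon>) * (\<bar>d \<omega>\<bar> * \<bar>e \<omega>\<bar>))"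
        by (rule Bochner_Integration.integrable_mult_right[OF ide])
      show "AE \<omega> in M. T2' \<omega> \<le> (2 * \<bar>B\<bar> / \<epsilon>) * (\<bar>d \<omega>\<bar> * \<bar>e \<omega>\<bar>)"
        using AEb AEp
      proof eventually_elim
        case (elim \<omega>)
        show ?case unfolding T2'_def Gf_def d_def e_def
          by (rule bound_T2) (use elim eps in auto)
      qed
    qed
    also have "\<dots> = (2 * \<bar>B\<bar> / \<epsilon>) * (\<integral>\<omega>. \<bar>d \<omega>\<bar> * \<bar>e \<omega>\<bar> \<partial>M)" by simp
    also have "\<dots> \<le> (2 * \<bar>B\<bar> / \<epsilon>) * (sqrt (\<integral>\<omega>. (d \<omega>)\<^sup>2 \<partial>M) * sqrt (\<integral>\<omega>. (e \<omega>)\<^sup>2 \<partial>M))"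
      by (rule mult_left_mono[OF cs_real[OF _ _ id2 ie2 ide] K0]) measurable
    also have "\<dots> = (2 * \<bar>B\<bar> / \<epsilon>) * Ld * Le"
      unfolding Ld_def Le_def L2X_def d_def e_def by simp
    also have "\<dots> \<le> (2 * \<bar>B\<bar> / \<epsilon>) * Ld * (Ld + Le)"
      using K0 Ld0 Le0 by (intro mult_left_mono mult_nonneg_nonneg) auto
    finally show ?thesis unfolding LHS Ld_def Le_def .
  qed
qed

theorem lemmaA6:
  fixes B \<epsilon> :: real
  assumes "\<epsilon> > 0"
  shows "\<exists>C. \<forall>(M :: 'w measure) (MX :: 'x measure) X A Y p mu \<pi> muh \<pi>h a.
    nuisance_model M MX X A Y p mu \<pi> \<and>
    (\<forall>a\<in>{1..p}. muh a \<in> borel_measurable MX \<and> \<pi>h a \<in> borel_measurable MX) \<and>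
    (\<forall>a\<in>{1..p}. AE \<omega> in M. \<bar>mu a (X \<omega>)\<bar> \<le> B \<and> \<bar>muh a (X \<omega>)\<bar> \<le> B) \<and>
    (\<forall>a\<in>{1..p}. AE \<omega> in M. \<epsilon> \<le> \<pi>h a (X \<omega>) \<and> \<pi>h a (X \<omega>) \<le> 1 - \<epsilon>) \<and>
    a \<in> {1..p}
    \<longrightarrow> (\<integral>\<omega>. phi2 \<pi>h muh a (Y \<omega>) (A \<omega>) (X \<omega>) - phi2 \<pi> mu a (Y \<omega>) (A \<omega>) (X \<omega>) \<partial>M)
        \<le> C * L2X M X (\<lambda>x. muh a x - mu a x)
              * (L2X M X (\<lambda>x. muh a x - mu a x) + L2X M X (\<lambda>x. \<pi>h a x - \<pi> a x))"
  using main[OF assms] by blast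

end
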